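(* Let $\Gamma$ be a set of clauses with designated blocking variables. If $C\lor\ell$ is cost-BC with respect to $\Gamma$ and the literal $\ell$, then $\mathrm{cost}(\Gamma)=\mathrm{cost}(\Gamma\cup\{C\lor\ell\})$.
   Context: For a CNF $\Gamma$ with designated blocking variables $b_1,\dots,b_m$: for a total assignment $\alpha$, $\mathrm{cost}(\alpha)=\sum_i\alpha(b_i)$, and $\mathrm{cost}(\Gamma)=\min\{\mathrm{cost}(\alpha):\alpha\text{ total},\ \alpha\models\Gamma\}$. A clause $C\lor\ell$ is cost-BC w.r.t. $\Gamma$ and the literal $\ell$ if for every clause of the form $D\lor\lnot\ell$ in $\Gamma$, $C\lor D$ is a tautology, and $\ell$ is not a blocking variable with positive polarity. *)

theory Defs
  imports Main "HOL-Library.Extended_Nat"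
begin

datatype 'v lit = Pos 'v | Neg 'v

fun neg :: "'v lit \<Rightarrow> 'v lit" where
  "neg (Pos v) = Neg v"
| "neg (Neg v) = Pos v"

type_synonym 'v clause = "'v lit set"
type_synonym 'v cnf = "'v clause set"

fun lit_sat :: "('v \<Rightarrow> bool) \<Rightarrow> 'v lit \<Rightarrow> bool" where
  "lit_sat \<alpha> (Pos v) = \<alpha> v"
| "lit_sat \<alpha> (Neg v) = (\<not> \<alpha> v)"

definition clause_sat :: "('v \<Rightarrow> bool) \<Rightarrow> 'v clause \<Rightarrow> bool" where
  "clause_sat \<alpha> C \<longleftrightarrow> (\<exists>l\<in>C. lit_sat \<alpha> l)"

definition cnf_sat :: "('v \<Rightarrow> bool) \<Rightarrow> 'v cnf \<Rightarrow> bool" where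
  "cnf_sat \<alpha> \<Gamma> \<longleftrightarrow> (\<forall>C\<in>\<Gamma>. clause_sat \<alpha> C)"

definition tautology :: "'v clause \<Rightarrow> bool" where
  "tautology C \<longleftrightarrow> (\<exists>l\<in>C. neg l \<in> C)"

(* B = the (finite) set of designated blocking variables *)
definition assign_cost :: "'v set \<Rightarrow> ('v \<Rightarrow> bool) \<Rightarrow> nat" where
  "assign_cost B \<alpha> = card {b\<in>B. \<alpha> b}"

(* minimum cost of a satisfying total assignment; \<infinity> if unsatisfiable *)
definition cnf_cost :: "'v set \<Rightarrow> 'v cnf \<Rightarrow> enat" where
  "cnf_cost B \<Gamma> = (INF \<alpha>\<in>{\<alpha>. cnf_sat \<alpha> \<Gamma>}. enat (assign_cost B \<alpha>))"

(* C \<or> l, as a clause, is insert l C *)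
definition cost_BC :: "'v set \<Rightarrow> 'v cnf \<Rightarrow> 'v clause \<Rightarrow> 'v lit \<Rightarrow> bool" where
  "cost_BC B \<Gamma> C l \<longleftrightarrow>
     (\<forall>D. insert (neg l) D \<in> \<Gamma> \<longrightarrow> tautology (C \<union> D))
     \<and> \<not> (\<exists>b\<in>B. l = Pos b)"

end

theory Submission
  imports Defs
begin

definition flipa :: "('v \<Rightarrow> bool) \<Rightarrow> 'v lit \<Rightarrow> 'v \<Rightarrow> bool" where
  "flipa \<alpha> l = (case l of Pos v \<Rightarrow> \<alpha>(v:=True) | Neg v \<Rightarrow> \<alpha>(v:=False))"

lemma flipa_l: "lit_sat (flipa \<alpha> l) l"
  by (cases l) (auto simp: flipa_def)

lemma flipa_k: "k \<noteq> neg l \<Longrightarrow> lit_sat \<alpha> k \<Longrightarrow> lit_sat (flipa \<alpha> l) k"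
  by (cases l; cases k) (auto simp: flipa_def)

lemma neg_neg[simp]: "neg (neg k) = k" by (cases k) auto

lemma lit_sat_neg[simp]: "lit_sat \<alpha> (neg k) = (\<not> lit_sat \<alpha> k)" by (cases k) auto

lemma flip_sat:
  assumes bc: "cost_BC B \<Gamma> C l" and s: "cnf_sat \<alpha> \<Gamma>" and ns: "\<not> clause_sat \<alpha> (insert l C)"
  shows "cnf_sat (flipa \<alpha> l) (\<Gamma> \<union> {insert l C})"
  unfolding cnf_sat_def
proof
  fix E assume E: "E \<in> \<Gamma> \<union> {insert l C}"
  show "clause_sat (flipa \<alpha> l) E"
  proof (cases "E = insert l C")
    case True then show ?thesis using flipa_l by (auto simp: clause_sat_def)
  next
    case False
    then have EG: "E \<in> \<Gamma>" using E by auto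
    show ?thesis
    proof (cases "neg l \<in> E")
      case False
      from EG s obtain k where "k \<in> E" "lit_sat \<alpha> k" by (auto simp: cnf_sat_def clause_sat_def)
      then show ?thesis using False flipa_k[of k l \<alpha>] by (auto simp: clause_sat_def)
    next
      case True
      define D where "D = E - {neg l}"
      have "insert (neg l) D = E" using True D_def by auto
      then have "tautology (C \<union> D)" using bc EG by (auto simp: cost_BC_def)
      then obtain k where k: "k \<in> C \<union> D" "neg k \<in> C \<union> D" by (auto simp: tautology_def)
      have nC: "\<And>x. x \<in> C \<Longrightarrow> \<not> lit_sat \<alpha> x" "\<not> lit_sat \<alpha> l" using ns by (auto simp: clause_sat_def)
      show ?thesis
      proof (cases "k \<in> C")
        case True
        then have "neg k \<in> D" using k nC by (metis Un_iff lit_sat_neg)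
        moreover have "lit_sat \<alpha> (neg k)" using nC True by simp
        moreover have "neg k \<noteq> neg l" using D_def \<open>neg k \<in> D\<close> by auto
        ultimately have "lit_sat (flipa \<alpha> l) (neg k)" using flipa_k[of "neg k" l \<alpha>] by blast
        then show ?thesis using \<open>neg k \<in> D\<close> D_def unfolding clause_sat_def by blast
      next
        case False
        then have kD: "k \<in> D" using k by auto
        show ?thesis
        proof (cases "neg k \<in> C")
          case True
          then have "lit_sat \<alpha> k" using nC by (metis lit_sat_neg)
          moreover have "k \<noteq> neg l" using D_def kD by auto
          ultimately show ?thesis using flipa_k[of k l \<alpha>] kD D_def by (auto simp: clause_sat_def)
        next
          case False
          then have "neg k \<in> D" using k by auto
          have "lit_sat (flipa \<alpha> l) k \<or> lit_sat (flipa \<alpha> l) (neg k)" by simp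
          moreover have "k \<in> E" "neg k \<in> E" using kD \<open>neg k \<in> D\<close> D_def by auto
          ultimately show ?thesis unfolding clause_sat_def by blast
        qed
      qed
    qed
  qed
qed

lemma flip_cost:
  assumes bc: "cost_BC B \<Gamma> C l" and fin: "finite B"
  shows "assign_cost B (flipa \<alpha> l) \<le> assign_cost B \<alpha>"
proof (cases l)
  case (Pos v)
  then have "v \<notin> B" using bc by (auto simp: cost_BC_def)
  then have "{b\<in>B. flipa \<alpha> l b} = {b\<in>B. \<alpha> b}" using Pos by (auto simp: flipa_def)
  then show ?thesis by (simp add: assign_cost_def)
next
  case (Neg v)
  have "{b\<in>B. flipa \<alpha> l b} \<subseteq> {b\<in>B. \<alpha> b}" using Neg by (auto simp: flipa_def)
  then show ?thesis unfolding assign_cost_def by (rule card_mono[rotated]) (use fin in auto)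
qed

theorem proposition3p5:
  fixes B :: "'v set" and \<Gamma> :: "'v cnf" and C :: "'v clause" and l :: "'v lit"
  assumes "finite B"
    and "cost_BC B \<Gamma> C l"
  shows "cnf_cost B \<Gamma> = cnf_cost B (\<Gamma> \<union> {insert l C})"
proof (rule antisym)
  show "cnf_cost B \<Gamma> \<le> cnf_cost B (\<Gamma> \<union> {insert l C})"
    unfolding cnf_cost_def by (rule INF_superset_mono) (auto simp: cnf_sat_def)
next
  show "cnf_cost B (\<Gamma> \<union> {insert l C}) \<le> cnf_cost B \<Gamma>"
    unfolding cnf_cost_def
  proof (rule INF_mono)
    fix \<alpha> assume a: "\<alpha> \<in> {\<alpha>. cnf_sat \<alpha> \<Gamma>}"
    show "\<exists>n\<in>{\<alpha>. cnf_sat \<alpha> (\<Gamma> \<union> {insert l C})}. enat (assign_cost B n) \<le> enat (assign_cost B \<alpha>)"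
    proof (cases "clause_sat \<alpha> (insert l C)")
      case True
      then show ?thesis using a by (intro bexI[of _ \<alpha>]) (auto simp: cnf_sat_def)
    next
      case False
      then show ?thesis using a flip_sat[OF assms(2) _ False] flip_cost[OF assms(2,1)]
        by (intro bexI[of _ "flipa \<alpha> l"]) auto
    qed
  qed
qed

end
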